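(* Let $A$ be a Hausdorff topological space. Then $+\infty\in P_h(A)$ if and only if $A$ is infinite.
   Context: For a topological space $A$, $Homeo(A)$ denotes the group of all homeomorphisms $A\to A$ under composition. For a subgroup $G$ of $Homeo(A)$ (acting by $gx=g(x)$), a nonempty subset $Y\subseteq A$ is invariant if $g(y)\in Y$ for all $g\in G$, $y\in Y$. The height of $(G,A)$ is $h(G,A)=\sup\{n\geq 0:$ there exist distinct closed invariant subsets $Y_0\subset Y_1\subset\cdots\subset Y_n=A\}$ (possibly $+\infty$). Finally $P_h(A)=\{h(G,A): G \text{ is a subgroup of } Homeo(A)\}$. *)

theory Defs
  imports "HOL-Analysis.Analysis" "HOL-Library.Extended_Nat"
begin

text \<open>Homeo(A): homeomorphisms of the space X onto itself, represented as functions
  that are extensional on the carrier (so equality of functions is equality on A).\<close>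

definition homeo_subgroup :: "'a topology \<Rightarrow> ('a \<Rightarrow> 'a) set \<Rightarrow> bool" where
  "homeo_subgroup X G \<longleftrightarrow>
     (\<forall>g\<in>G. homeomorphic_map X X g \<and> g \<in> extensional (topspace X)) \<and>
     restrict id (topspace X) \<in> G \<and>
     (\<forall>f\<in>G. \<forall>g\<in>G. restrict (f \<circ> g) (topspace X) \<in> G) \<and>
     (\<forall>g\<in>G. restrict (inv_into (topspace X) g) (topspace X) \<in> G)"

definition invariant_set :: "'a topology \<Rightarrow> ('a \<Rightarrow> 'a) set \<Rightarrow> 'a set \<Rightarrow> bool" where
  "invariant_set X G Y \<longleftrightarrow>
     Y \<noteq> {} \<and> Y \<subseteq> topspace X \<and> (\<forall>g\<in>G. \<forall>y\<in>Y. g y \<in> Y)"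

definition action_height :: "'a topology \<Rightarrow> ('a \<Rightarrow> 'a) set \<Rightarrow> enat" where
  "action_height X G = Sup {enat n | n. \<exists>Y :: nat \<Rightarrow> 'a set.
      (\<forall>i\<le>n. closedin X (Y i) \<and> invariant_set X G (Y i)) \<and>
      (\<forall>i<n. Y i \<subset> Y (Suc i)) \<and> Y n = topspace X}"

definition P_h :: "'a topology \<Rightarrow> enat set" where
  "P_h X = {action_height X G | G. homeo_subgroup X G}"

end

theory Submission
  imports Defs
begin

lemma enat_all_le_inf: "(\<And>n. enat n \<le> x) \<Longrightarrow> x = \<infinity>"
  by (metis Suc_ile_eq enat.exhaust order_less_irrefl)

lemma chain_card:
  assumes fin: "finite (topspace X)"
    and Y: "\<forall>i\<le>n. closedin X (Y i) \<and> invariant_set X G (Y i)"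
    and ch: "\<forall>i<n. Y i \<subset> Y (Suc i)"
  shows "i \<le> n \<Longrightarrow> i \<le> card (Y i)"
proof (induction i)
  case 0 then show ?case by simp
next
  case (Suc i)
  have "Y (Suc i) \<subseteq> topspace X" using Y Suc.prems unfolding invariant_set_def by blast
  then have "finite (Y (Suc i))" using fin finite_subset by blast
  moreover have "Y i \<subset> Y (Suc i)" using ch Suc.prems by simp
  ultimately have "card (Y i) < card (Y (Suc i))" by (simp add: psubset_card_mono)
  then show ?case using Suc by simp
qed

lemma trivial_group: "homeo_subgroup X {restrict id (topspace X)}"
proof -
  have h: "homeomorphic_map X X (restrict id (topspace X))"
    by (rule homeomorphic_map_eq[of X X id]) auto
  have c: "restrict (restrict id (topspace X) \<circ> restrict id (topspace X)) (topspace X)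
           = restrict id (topspace X)"
    by (auto simp: restrict_def)
  have i: "restrict (inv_into (topspace X) (restrict id (topspace X))) (topspace X)
           = restrict id (topspace X)"
  proof
    fix x show "restrict (inv_into (topspace X) (restrict id (topspace X))) (topspace X) x
           = restrict id (topspace X) x"
    proof (cases "x \<in> topspace X")
      case True
      have "inj_on (restrict id (topspace X)) (topspace X)" by (simp add: inj_on_def)
      then have "inv_into (topspace X) (restrict id (topspace X)) (restrict id (topspace X) x) = x"
        using True by (rule inv_into_f_f)
      then show ?thesis using True by simp
    qed simp
  qed
  show ?thesis unfolding homeo_subgroup_def using h c i by simp
qed

theorem lemma2p2:
  fixes X :: "'a topology"
  assumes "Hausdorff_space X"
  shows "\<infinity> \<in> P_h X \<longleftrightarrow> infinite (topspace X)"
proof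
  assume inf: "\<infinity> \<in> P_h X"
  show "infinite (topspace X)"
  proof
    assume fin: "finite (topspace X)"
    from inf obtain G where "action_height X G = \<infinity>" unfolding P_h_def by (smt (verit) mem_Collect_eq)
    moreover have "action_height X G \<le> enat (card (topspace X))"
      unfolding action_height_def
    proof (rule Sup_least, clarify)
      fix n and Y :: "nat \<Rightarrow> 'a set"
      assume Y: "\<forall>i\<le>n. closedin X (Y i) \<and> invariant_set X G (Y i)"
        and ch: "\<forall>i<n. Y i \<subset> Y (Suc i)" and e: "Y n = topspace X"
      have "n \<le> card (Y n)" using chain_card[OF fin Y ch] by simp
      then show "enat n \<le> enat (card (topspace X))" using e by simp
    qed
    ultimately show False by simp
  qed
next
  assume inf: "infinite (topspace X)"
  have t1: "t1_space X" using assms by (simp add: Hausdorff_imp_t1_space)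
  obtain x :: "nat \<Rightarrow> 'a" where x: "inj x" "range x \<subseteq> topspace X"
    using infinite_countable_subset[OF inf] by blast
  define G where "G = {restrict id (topspace X)}"
  have "action_height X G = \<infinity>"
    unfolding action_height_def
  proof (rule enat_all_le_inf, rule Sup_upper, simp)
    fix n
    define Y where "Y i = (if i < n then x ` {..i} else topspace X)" for i
    have inv: "invariant_set X G S" if "S \<noteq> {}" "S \<subseteq> topspace X" for S
      using that unfolding invariant_set_def G_def by auto
    have cl: "closedin X (Y i) \<and> invariant_set X G (Y i)" for i
    proof (cases "i < n")
      case True
      have sub: "x ` {..i} \<subseteq> topspace X" using x by auto
      then show ?thesis using True t1 inv[OF _ sub] unfolding Y_def t1_space_closedin_finite by auto
    next
      case False
      have "topspace X \<noteq> {}" using inf by auto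
      then show ?thesis using False inv[of "topspace X"] unfolding Y_def by auto
    qed
    have ch: "Y i \<subset> Y (Suc i)" if "i < n" for i
    proof (cases "Suc i < n")
      case True
      have "x (Suc i) \<notin> x ` {..i}" using x(1) by (auto simp: inj_eq)
      then show ?thesis using True unfolding Y_def by (auto simp: atMost_Suc)
    next
      case False
      have "x ` {..i} \<subseteq> topspace X" using x by auto
      moreover have "x ` {..i} \<noteq> topspace X" using inf by (metis finite_atMost finite_imageI)
      ultimately show ?thesis using False that unfolding Y_def by auto
    qed
    show "\<exists>Y. (\<forall>i\<le>n. closedin X (Y i) \<and> invariant_set X G (Y i)) \<and>
              (\<forall>i<n. Y i \<subset> Y (Suc i)) \<and> Y n = topspace X"
      by (rule exI[of _ Y]) (use cl ch in \<open>auto simp: Y_def\<close>)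
  qed
  then show "\<infinity> \<in> P_h X" unfolding P_h_def using trivial_group[of X] G_def by (metis (mono_tags, lifting) mem_Collect_eq)
qed

end
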